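(* Let $N\in\mathbb N$ and $\mu\in(k-1,k)$ with $k\in\{1,2\}$. For every $f\in{}_0\mathcal P_N$, the problem $$ {}^R\hat D_-^\mu u(x)=f(x),\qquad u(-1)=0, $$ has a unique solution $u\in{}_0\mathcal P_N$, namely $u(x)=I_-^\mu\{(1+x)^{-\mu}f(x)\}$. Moreover, for every $u\in\mathcal P_N$, $({}^R\hat D_-^\mu u)(-1)=0$ if and only if $u(-1)=0$.
   Context: For $\rho>0$, $(I_-^\rho u)(x)=\frac{1}{\Gamma(\rho)}\int_{-1}^x (x-y)^{\rho-1}u(y)\,dy$, $D^k=d^k/dx^k$; for $\mu\in(k-1,k)$ the Riemann–Liouville derivative is ${}^R D_-^\mu u=D^k(I_-^{k-\mu}u)$, and ${}^R\hat D_-^\mu u=(1+x)^\mu\,{}^R D_-^\mu u$, which for $u\in\mathcal P_N$ is a polynomial (its value at $-1$ is that of the polynomial). $\mathcal P_N$ denotes polynomials of degree $\le N$ and ${}_0\mathcal P_N=\{\phi\in\mathcal P_N:\phi(-1)=0\}$. *)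

theory Defs
  imports "HOL-Analysis.Analysis" "HOL-Computational_Algebra.Polynomial"
begin

definition RL_int :: "real \<Rightarrow> (real \<Rightarrow> real) \<Rightarrow> real \<Rightarrow> real" where
  "RL_int \<rho> u x = integral {-1..x} (\<lambda>y. (x - y) powr (\<rho> - 1) * u y) / Gamma \<rho>"

definition RL_deriv :: "nat \<Rightarrow> real \<Rightarrow> (real \<Rightarrow> real) \<Rightarrow> real \<Rightarrow> real" where
  "RL_deriv k \<mu> u x = (deriv ^^ k) (RL_int (real k - \<mu>) u) x"

definition RL_hat_deriv :: "nat \<Rightarrow> real \<Rightarrow> (real \<Rightarrow> real) \<Rightarrow> real \<Rightarrow> real" where
  "RL_hat_deriv k \<mu> u x = (1 + x) powr \<mu> * RL_deriv k \<mu> u x"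

end

theory Submission
  imports Defs
begin

lemma beta_shift:
  fixes a b x :: real
  assumes a: "a > -1" and b: "b > -1" and x: "x > -1"
  shows "((\<lambda>y. (x-y) powr a * (1+y) powr b) has_integral
           (Beta (b+1) (a+1) * (1+x) powr (a+b+1))) {-1..x}"
proof -
  define L where "L = 1 + x"
  have L: "L > 0" using x by (simp add: L_def)
  have B: "((\<lambda>t. t powr (b + 1 - 1) * (1 - t) powr (a + 1 - 1)) has_integral Beta (b+1) (a+1)) (cbox 0 1)"
    using has_integral_Beta_real[of "b+1" "a+1"] a b by simp
  have m: "1/L > 0" using L by simp
  from has_integral_affinity'[OF B m, of "1/L"]
  have "((\<lambda>y. ((1/L) * y + 1/L) powr b * (1 - ((1/L) * y + 1/L)) powr a) has_integral
          (Beta (b+1) (a+1) * L)) {-1..x}"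
    using L by (simp add: field_simps L_def)
  hence "((\<lambda>y. L powr (a+b) * (((1/L) * y + 1/L) powr b * (1 - ((1/L) * y + 1/L)) powr a)) has_integral
          L powr (a+b) * (Beta (b+1) (a+1) * L)) {-1..x}"
    by (rule has_integral_mult_right)
  hence I: "((\<lambda>y. L powr (a+b) * (((1/L) * y + 1/L) powr b * (1 - ((1/L) * y + 1/L)) powr a)) has_integral
          (Beta (b+1) (a+1) * (1+x) powr (a+b+1))) {-1..x}"
    using L by (simp add: powr_add L_def mult_ac)
  show ?thesis
  proof (rule has_integral_spike_finite[OF _ _ I])
    show "finite ({}::real set)" by simp
    fix y assume y: "y \<in> {-1..x} - {}"
    have e1: "(1/L) * y + 1/L = (1+y) / L" using L by (simp add: field_simps)
    have e2: "1 - (1+y)/L = (x-y) / L" using L by (simp add: field_simps L_def)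
    have "L powr (a+b) * (((1+y)/L) powr b * ((x-y)/L) powr a)
        = (L powr a * L powr b) * (((1+y) powr b / L powr b) * ((x-y) powr a / L powr a))"
      using y L by (simp add: powr_divide powr_add)
    also have "\<dots> = (x-y) powr a * (1+y) powr b" using L by (simp add: field_simps)
    finally have "L powr (a+b) * (((1/L) * y + 1/L) powr b * (1 - ((1/L) * y + 1/L)) powr a) = (x-y) powr a * (1+y) powr b"
      by (simp only: e1 e2)
    thus "(x-y) powr a * (1+y) powr b = L powr (a+b) * (((1/L) * y + 1/L) powr b * (1 - ((1/L) * y + 1/L)) powr a)" by simp
  qed
qed

lemma RL_pow:
  fixes \<rho> b x :: real
  assumes r: "\<rho> > 0" and b: "b > -1" and x: "x > -1"
  shows "((\<lambda>y. (x-y) powr (\<rho>-1) * (1+y) powr b) has_integral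
           (Gamma \<rho> * (Gamma (b+1) / Gamma (b+1+\<rho>)) * (1+x) powr (b+\<rho>))) {-1..x}"
  using beta_shift[of "\<rho>-1" b x] assms by (simp add: Beta_def algebra_simps)


lemma sum_pow0: "(\<Sum>j\<le>N. c j * (0::real)^j) = c 0"
  by (induction N) auto

definition mkp :: "nat \<Rightarrow> (nat \<Rightarrow> real) \<Rightarrow> real poly" where
  "mkp N c = pcompose (\<Sum>j\<le>N. monom (c j) j) [:1,1:]"

lemma poly_mkp: "poly (mkp N c) y = (\<Sum>j\<le>N. c j * (1+y)^j)"
  by (simp add: mkp_def poly_pcompose poly_sum poly_monom add.commute)

lemma degree_mkp: "degree (mkp N c) \<le> N"
proof -
  have "degree (\<Sum>j\<le>N. monom (c j) j) \<le> N"
    by (rule degree_sum_le) (auto intro: order_trans[OF degree_monom_le])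
  thus ?thesis unfolding mkp_def degree_pcompose by simp
qed

lemma poly_repr:
  fixes p :: "real poly"
  assumes "degree p \<le> N"
  obtains c where "\<And>y. poly p y = (\<Sum>j\<le>N. c j * (1+y)^j)"
proof
  define v where "v = pcompose p [:-1,1:]"
  have dv: "degree v \<le> N" using assms by (simp add: v_def degree_pcompose)
  have pv: "poly v z = (\<Sum>i\<le>N. coeff v i * z^i)" for z
  proof -
    have "poly v z = poly (\<Sum>i\<le>N. monom (coeff v i) i) z" using poly_as_sum_of_monoms'[OF dv] by simp
    thus ?thesis by (simp add: poly_sum poly_monom)
  qed
  fix y
  have "poly p y = poly v (1+y)" by (simp add: v_def poly_pcompose)
  thus "poly p y = (\<Sum>j\<le>N. coeff v j * (1+y)^j)" using pv by simp
qed

lemma coeff_unique: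
  fixes e :: "nat \<Rightarrow> real"
  assumes "\<forall>x\<in>{-1<..<1::real}. (\<Sum>j\<le>N. e j * (1+x)^j) = 0" and "j \<le> N"
  shows "e j = 0"
proof -
  define W where "W = (\<Sum>j\<le>N. monom (e j) j)"
  have pw: "poly W z = (\<Sum>j\<le>N. e j * z^j)" for z by (simp add: W_def poly_sum poly_monom)
  have sub: "{0<..<2::real} \<subseteq> {z. poly W z = 0}"
  proof
    fix z :: real assume z: "z \<in> {0<..<2}"
    hence "z - 1 \<in> {-1<..<1}" by auto
    with assms(1) have "(\<Sum>j\<le>N. e j * (1+(z-1))^j) = 0" by blast
    thus "z \<in> {z. poly W z = 0}" using pw by simp
  qed
  have "W = 0"
  proof (rule ccontr)
    assume "W \<noteq> 0"
    hence "finite {z. poly W z = 0}" by (rule poly_roots_finite)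
    hence "finite {0<..<2::real}" using sub finite_subset by blast
    thus False using infinite_Ioo[of "0::real" 2] by simp
  qed
  hence "coeff W j = 0" by simp
  moreover have "coeff W j = e j" using assms(2) by (simp add: W_def coeff_sum)
  ultimately show ?thesis by simp
qed

lemma deriv_iter:
  fixes d e :: "nat \<Rightarrow> real" and F :: "real \<Rightarrow> real"
  assumes F: "\<And>x. x > -1 \<Longrightarrow> F x = (\<Sum>j\<le>N. d j * (1+x) powr (e j))"
  shows "x > -1 \<Longrightarrow> (deriv^^n) F x = (\<Sum>j\<le>N. d j * pochhammer (e j - real n + 1) n * (1+x) powr (e j - real n))"
proof (induction n arbitrary: x)
  case 0 thus ?case using F by simp
next
  case (Suc n)
  define G where "G = (\<lambda>x. \<Sum>j\<le>N. d j * pochhammer (e j - real n + 1) n * (1+x) powr (e j - real n))"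
  have "(G has_field_derivative (\<Sum>j\<le>N. d j * pochhammer (e j - real (Suc n) + 1) (Suc n) * (1+x) powr (e j - real (Suc n)))) (at x)"
    unfolding G_def
  proof (rule DERIV_sum)
    fix j assume "j \<in> {..N}"
    have "((\<lambda>x. d j * pochhammer (e j - real n + 1) n * (1+x) powr (e j - real n)) has_field_derivative
        d j * pochhammer (e j - real n + 1) n * ((e j - real n) * (1+x) powr (e j - real n - 1))) (at x)"
      using Suc.prems by (auto intro!: derivative_eq_intros)
    moreover have "d j * pochhammer (e j - real n + 1) n * ((e j - real n) * (1+x) powr (e j - real n - 1))
       = d j * pochhammer (e j - real (Suc n) + 1) (Suc n) * (1+x) powr (e j - real (Suc n))"
    proof -
      have P: "pochhammer (e j - real (Suc n) + 1) (Suc n) = (e j - real n) * pochhammer (e j - real n + 1) n"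
        by (simp add: pochhammer_rec algebra_simps)
      have E: "e j - real n - 1 = e j - real (Suc n)" by simp
      show ?thesis by (subst P, subst E[symmetric]) (simp add: ac_simps)
    qed
    ultimately show "((\<lambda>x. d j * pochhammer (e j - real n + 1) n * (1+x) powr (e j - real n)) has_field_derivative
        d j * pochhammer (e j - real (Suc n) + 1) (Suc n) * (1+x) powr (e j - real (Suc n))) (at x)" by simp
  qed
  hence "((deriv^^n) F has_field_derivative (\<Sum>j\<le>N. d j * pochhammer (e j - real (Suc n) + 1) (Suc n) * (1+x) powr (e j - real (Suc n)))) (at x)"
    by (rule has_field_derivative_transform_within_open[where S="{-1<..}"])
       (use Suc in \<open>auto simp: G_def\<close>)
  hence "deriv ((deriv^^n) F) x = (\<Sum>j\<le>N. d j * pochhammer (e j - real (Suc n) + 1) (Suc n) * (1+x) powr (e j - real (Suc n)))"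
    by (rule DERIV_imp_deriv)
  thus ?case by simp
qed


lemma RL_int_poly:
  fixes c :: "nat \<Rightarrow> real"
  assumes r: "\<rho> > 0" and x: "x > -1" and P: "\<And>y. p y = (\<Sum>j\<le>N. c j * (1+y)^j)"
  shows "RL_int \<rho> p x = (\<Sum>j\<le>N. c j * (Gamma (real j+1) / Gamma (real j+1+\<rho>)) * (1+x) powr (real j + \<rho>))"
proof -
  have I: "((\<lambda>y. \<Sum>j\<le>N. c j * ((x-y) powr (\<rho>-1) * (1+y) powr (real j))) has_integral
      (\<Sum>j\<le>N. c j * (Gamma \<rho> * (Gamma (real j+1) / Gamma (real j+1+\<rho>)) * (1+x) powr (real j+\<rho>)))) {-1..x}"
    by (intro has_integral_sum has_integral_mult_right RL_pow) (use r x in auto)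
  have "((\<lambda>y. (x-y) powr (\<rho>-1) * p y) has_integral
      (\<Sum>j\<le>N. c j * (Gamma \<rho> * (Gamma (real j+1) / Gamma (real j+1+\<rho>)) * (1+x) powr (real j+\<rho>)))) {-1..x}"
  proof (rule has_integral_spike_finite[OF _ _ I])
    show "finite {-1::real}" by simp
    fix y :: real assume y: "y \<in> {-1..x} - {-1}"
    hence y1: "1 + y > 0" by auto
    show "(x-y) powr (\<rho>-1) * p y = (\<Sum>j\<le>N. c j * ((x-y) powr (\<rho>-1) * (1+y) powr (real j)))"
      using y1 by (simp add: P sum_distrib_left powr_realpow ac_simps)
  qed
  hence "integral {-1..x} (\<lambda>y. (x-y) powr (\<rho>-1) * p y) =
      (\<Sum>j\<le>N. c j * (Gamma \<rho> * (Gamma (real j+1) / Gamma (real j+1+\<rho>)) * (1+x) powr (real j+\<rho>)))"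
    by (rule integral_unique)
  moreover have "Gamma \<rho> > 0" using r by simp
  ultimately show ?thesis unfolding RL_int_def
    by (simp add: sum_divide_distrib mult.assoc)
qed

definition lam :: "nat \<Rightarrow> real \<Rightarrow> nat \<Rightarrow> real" where
  "lam k \<mu> j = Gamma (real j + 1) * pochhammer (real j + 1 - \<mu>) k / Gamma (real j + 1 + real k - \<mu>)"

lemma hat_poly:
  fixes c :: "nat \<Rightarrow> real"
  assumes r: "0 < real k - \<mu>" and x: "x > -1" and P: "\<And>y. poly u y = (\<Sum>j\<le>N. c j * (1+y)^j)"
  shows "RL_hat_deriv k \<mu> (poly u) x = (\<Sum>j\<le>N. c j * lam k \<mu> j * (1+x)^j)"
proof -
  define d where "d j = c j * (Gamma (real j+1) / Gamma (real j+1+(real k - \<mu>)))" for j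
  define e where "e j = real j + (real k - \<mu>)" for j
  have F: "\<And>x. x > -1 \<Longrightarrow> RL_int (real k - \<mu>) (poly u) x = (\<Sum>j\<le>N. d j * (1+x) powr (e j))"
    using RL_int_poly[OF r _ P] by (simp add: d_def e_def)
  have D: "(deriv^^k) (RL_int (real k - \<mu>) (poly u)) x =
      (\<Sum>j\<le>N. d j * pochhammer (e j - real k + 1) k * (1+x) powr (e j - real k))"
    by (rule deriv_iter[OF F x])
  have "RL_hat_deriv k \<mu> (poly u) x = (\<Sum>j\<le>N. (1+x) powr \<mu> * (d j * pochhammer (e j - real k + 1) k * (1+x) powr (e j - real k)))"
    unfolding RL_hat_deriv_def RL_deriv_def D by (simp add: sum_distrib_left)
  also have "\<dots> = (\<Sum>j\<le>N. c j * lam k \<mu> j * (1+x)^j)"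
  proof (rule sum.cong[OF refl])
    fix j
    have x1: "1 + x > 0" using x by simp
    have E3: "(1+x) powr \<mu> * (1+x) powr (e j - real k) = (1+x)^j"
      using x1 by (simp add: e_def powr_add[symmetric] powr_realpow)
    have E1: "pochhammer (e j - real k + 1) k = pochhammer (real j + 1 - \<mu>) k"
      by (rule arg_cong[where f="\<lambda>z. pochhammer z k"]) (simp add: e_def)
    have E2: "Gamma (real j+1+(real k - \<mu>)) = Gamma (real j + 1 + real k - \<mu>)"
      by (rule arg_cong[where f=Gamma]) simp
    have aux: "\<And>A B C G H P :: real. A * (C * (G / H) * P * B) = C * (G * P / H) * (A * B)"
      by simp
    show "(1+x) powr \<mu> * (d j * pochhammer (e j - real k + 1) k * (1+x) powr (e j - real k)) = c j * lam k \<mu> j * (1+x)^j"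
      unfolding lam_def d_def E1 E2 aux E3 ..
  qed
  finally show ?thesis .
qed

lemma lam_nz:
  assumes "real k - 1 < \<mu>" "\<mu> < real k"
  shows "lam k \<mu> j \<noteq> 0"
proof -
  have g1: "Gamma (real j + 1) > 0" by simp
  have g2: "Gamma (real j + 1 + real k - \<mu>) > 0" using assms by (intro Gamma_real_pos) simp
  have "pochhammer (real j + 1 - \<mu>) k \<noteq> 0"
  proof
    assume "pochhammer (real j + 1 - \<mu>) k = 0"
    then obtain i where "i < k" "real j + 1 - \<mu> = - real i" by (auto simp: pochhammer_eq_0_iff)
    hence m: "\<mu> = real (j + 1 + i)" by simp
    have "real k < real (j+1+i+1)" using assms(1) m by simp
    hence "k < j+1+i+1" by (simp only: of_nat_less_iff)
    moreover have "real (j+1+i) < real k" using assms(2) m by simp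
    hence "j+1+i < k" by (simp only: of_nat_less_iff)
    ultimately show False by simp
  qed
  moreover have "Gamma (real j + 1) \<noteq> 0" using g1 by linarith
  ultimately show ?thesis using g2 by (simp add: lam_def)
qed

lemma lam_inv:
  assumes "real k - 1 < \<mu>" "\<mu> < real k" "k \<le> 2" "j \<ge> 1"
  shows "lam k \<mu> j = Gamma (real j + 1) / Gamma (real j + 1 - \<mu>)"
proof -
  have z: "real j + 1 - \<mu> > 0" using assms by linarith
  hence "real j + 1 - \<mu> \<notin> \<int>\<^sub>\<le>\<^sub>0" by (auto elim!: nonpos_Ints_cases)
  hence "pochhammer (real j + 1 - \<mu>) k = Gamma (real j + 1 - \<mu> + real k) / Gamma (real j + 1 - \<mu>)"
    by (rule pochhammer_Gamma)
  moreover have "Gamma (real j + 1 + real k - \<mu>) > 0" using assms by (intro Gamma_real_pos) simp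
  moreover have "real j + 1 - \<mu> + real k = real j + 1 + real k - \<mu>" by simp
  ultimately show ?thesis unfolding lam_def by simp
qed

lemma RL_int_f:
  fixes a :: "nat \<Rightarrow> real"
  assumes m: "0 < \<mu>" "\<mu> < 2" and x: "x > -1" and a0: "a 0 = 0"
    and P: "\<And>y. poly f y = (\<Sum>j\<le>N. a j * (1+y)^j)"
  shows "RL_int \<mu> (\<lambda>y. (1+y) powr (-\<mu>) * poly f y) x =
     (\<Sum>j\<le>N. a j * (Gamma (real j + 1 - \<mu>) / Gamma (real j + 1)) * (1+x)^j)"
proof -
  have I: "((\<lambda>y. \<Sum>j\<le>N. a j * ((x-y) powr (\<mu>-1) * (1+y) powr (real j - \<mu>))) has_integral
      (\<Sum>j\<le>N. a j * (Gamma \<mu> * (Gamma (real j - \<mu> + 1) / Gamma (real j - \<mu> + 1 + \<mu>)) * (1+x) powr (real j - \<mu> + \<mu>)))) {-1..x}"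
  proof (intro has_integral_sum)
    fix j assume "j \<in> {..N}"
    show "((\<lambda>y. a j * ((x-y) powr (\<mu>-1) * (1+y) powr (real j - \<mu>))) has_integral
      a j * (Gamma \<mu> * (Gamma (real j - \<mu> + 1) / Gamma (real j - \<mu> + 1 + \<mu>)) * (1+x) powr (real j - \<mu> + \<mu>))) {-1..x}"
    proof (cases "j = 0")
      case True thus ?thesis using a0 by simp
    next
      case False
      hence "real j \<ge> 1" by simp
      thus ?thesis by (intro has_integral_mult_right RL_pow) (use m x in auto)
    qed
  qed simp
  have "((\<lambda>y. (x-y) powr (\<mu>-1) * ((1+y) powr (-\<mu>) * poly f y)) has_integral
      (\<Sum>j\<le>N. a j * (Gamma \<mu> * (Gamma (real j - \<mu> + 1) / Gamma (real j - \<mu> + 1 + \<mu>)) * (1+x) powr (real j - \<mu> + \<mu>)))) {-1..x}"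
  proof (rule has_integral_spike_finite[OF _ _ I])
    show "finite {-1::real}" by simp
    fix y :: real assume y: "y \<in> {-1..x} - {-1}"
    hence y1: "1 + y > 0" by auto
    have "\<And>j. (1+y) powr (-\<mu>) * (1+y)^j = (1+y) powr (real j - \<mu>)"
      using y1 by (simp add: powr_realpow[symmetric] powr_add[symmetric])
    thus "(x-y) powr (\<mu>-1) * ((1+y) powr (-\<mu>) * poly f y) = (\<Sum>j\<le>N. a j * ((x-y) powr (\<mu>-1) * (1+y) powr (real j - \<mu>)))"
      by (simp add: P sum_distrib_left ac_simps)
  qed
  hence "integral {-1..x} (\<lambda>y. (x-y) powr (\<mu>-1) * ((1+y) powr (-\<mu>) * poly f y)) =
      (\<Sum>j\<le>N. a j * (Gamma \<mu> * (Gamma (real j - \<mu> + 1) / Gamma (real j - \<mu> + 1 + \<mu>)) * (1+x) powr (real j - \<mu> + \<mu>)))"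
    by (rule integral_unique)
  also have "\<dots> = Gamma \<mu> * (\<Sum>j\<le>N. a j * (Gamma (real j + 1 - \<mu>) / Gamma (real j + 1)) * (1+x)^j)"
    unfolding sum_distrib_left
  proof (rule sum.cong[OF refl])
    fix j
    have "(1+x) powr (real j - \<mu> + \<mu>) = (1+x)^j" using x by (simp add: powr_realpow)
    moreover have "Gamma (real j - \<mu> + 1) = Gamma (real j + 1 - \<mu>)" by (rule arg_cong[where f=Gamma]) simp
    moreover have "Gamma (real j - \<mu> + 1 + \<mu>) = Gamma (real j + 1)" by (rule arg_cong[where f=Gamma]) simp
    ultimately show "a j * (Gamma \<mu> * (Gamma (real j - \<mu> + 1) / Gamma (real j - \<mu> + 1 + \<mu>)) * (1+x) powr (real j - \<mu> + \<mu>))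
        = Gamma \<mu> * (a j * (Gamma (real j + 1 - \<mu>) / Gamma (real j + 1)) * (1+x)^j)" by simp
  qed
  moreover have "Gamma \<mu> \<noteq> 0" using Gamma_real_pos[of \<mu>] m by linarith
  ultimately show ?thesis unfolding RL_int_def by simp
qed


lemma sol_char:
  fixes a cu :: "nat \<Rightarrow> real"
  assumes r: "0 < real k - \<mu>"
    and Pu: "\<And>y. poly u y = (\<Sum>j\<le>N. cu j * (1+y)^j)"
    and Pf: "\<And>y. poly f y = (\<Sum>j\<le>N. a j * (1+y)^j)"
    and H: "\<forall>x\<in>{-1<..<1}. RL_hat_deriv k \<mu> (poly u) x = poly f x"
    and j: "j \<le> N"
  shows "cu j * lam k \<mu> j = a j"
proof -
  have "\<forall>x\<in>{-1<..<1::real}. (\<Sum>j\<le>N. (cu j * lam k \<mu> j - a j) * (1+x)^j) = 0"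
  proof
    fix x :: real assume x: "x \<in> {-1<..<1}"
    hence "(\<Sum>j\<le>N. cu j * lam k \<mu> j * (1+x)^j) = (\<Sum>j\<le>N. a j * (1+x)^j)"
      using H hat_poly[OF r _ Pu, of x] Pf by auto
    thus "(\<Sum>j\<le>N. (cu j * lam k \<mu> j - a j) * (1+x)^j) = 0"
      by (simp add: left_diff_distrib sum_subtractf)
  qed
  from coeff_unique[OF this j] show ?thesis by simp
qed

theorem lemma5p1:
  fixes N k :: nat and \<mu> :: real
  assumes "k \<in> {1, 2}" and "real k - 1 < \<mu>" and "\<mu> < real k"
  shows "(\<forall>f :: real poly. degree f \<le> N \<and> poly f (-1) = 0 \<longrightarrow>
            (\<exists>!u :: real poly. degree u \<le> N \<and> poly u (-1) = 0 \<and>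
                 (\<forall>x\<in>{-1<..<1}. RL_hat_deriv k \<mu> (poly u) x = poly f x)) \<and>
            (\<forall>u :: real poly. degree u \<le> N \<and> poly u (-1) = 0 \<and>
                 (\<forall>x\<in>{-1<..<1}. RL_hat_deriv k \<mu> (poly u) x = poly f x) \<longrightarrow>
               (\<forall>x\<in>{-1<..<1}. poly u x =
                  RL_int \<mu> (\<lambda>y. (1 + y) powr (- \<mu>) * poly f y) x)))
       \<and> (\<forall>u :: real poly. degree u \<le> N \<longrightarrow>
            (\<exists>q :: real poly. (\<forall>x\<in>{-1<..<1}. RL_hat_deriv k \<mu> (poly u) x = poly q x) \<and>
               (poly q (-1) = 0 \<longleftrightarrow> poly u (-1) = 0)))"
proof -
  have k2: "k \<le> 2" using assms(1) by auto
  have r: "0 < real k - \<mu>" using assms by simp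
  have m0: "0 < \<mu>" using assms(1,2) by auto
  have m2: "\<mu> < 2" using assms(3) k2 by linarith
  have lnz: "\<And>j. lam k \<mu> j \<noteq> 0" using lam_nz assms(2,3) by blast
  have part1: "(\<exists>!u :: real poly. degree u \<le> N \<and> poly u (-1) = 0 \<and>
                 (\<forall>x\<in>{-1<..<1}. RL_hat_deriv k \<mu> (poly u) x = poly f x)) \<and>
            (\<forall>u :: real poly. degree u \<le> N \<and> poly u (-1) = 0 \<and>
                 (\<forall>x\<in>{-1<..<1}. RL_hat_deriv k \<mu> (poly u) x = poly f x) \<longrightarrow>
               (\<forall>x\<in>{-1<..<1}. poly u x =
                  RL_int \<mu> (\<lambda>y. (1 + y) powr (- \<mu>) * poly f y) x))"
    if f: "degree f \<le> N" "poly f (-1) = 0" for f :: "real poly"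
  proof -
    obtain a where Pf: "\<And>y. poly f y = (\<Sum>j\<le>N. a j * (1+y)^j)"
      using poly_repr[OF f(1)] by blast
    have a0: "a 0 = 0" using f(2) Pf[of "-1"] sum_pow0[of a N] by simp
    define c where "c j = a j / lam k \<mu> j" for j
    define u0 where "u0 = mkp N c"
    have Pu0: "\<And>y. poly u0 y = (\<Sum>j\<le>N. c j * (1+y)^j)" by (simp add: u0_def poly_mkp)
    have chr: "poly u y = poly u0 y"
      if u: "degree u \<le> N" "\<forall>x\<in>{-1<..<1}. RL_hat_deriv k \<mu> (poly u) x = poly f x" for u y
    proof -
      obtain cu where Pu: "\<And>y. poly u y = (\<Sum>j\<le>N. cu j * (1+y)^j)"
        using poly_repr[OF u(1)] by blast
      have "\<And>j. j \<le> N \<Longrightarrow> cu j = c j"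
        using sol_char[OF r Pu Pf u(2)] lnz by (simp add: c_def field_simps)
      thus ?thesis by (simp add: Pu Pu0)
    qed
    have S: "degree u0 \<le> N \<and> poly u0 (-1) = 0 \<and>
                 (\<forall>x\<in>{-1<..<1}. RL_hat_deriv k \<mu> (poly u0) x = poly f x)"
    proof (intro conjI ballI)
      show "degree u0 \<le> N" by (simp add: u0_def degree_mkp)
      show "poly u0 (-1) = 0" using Pu0[of "-1"] sum_pow0[of c N] a0 by (simp add: c_def)
      fix x :: real assume "x \<in> {-1<..<1}"
      hence "RL_hat_deriv k \<mu> (poly u0) x = (\<Sum>j\<le>N. c j * lam k \<mu> j * (1+x)^j)"
        using hat_poly[OF r _ Pu0] by auto
      also have "\<dots> = poly f x" using lnz by (simp add: Pf c_def)
      finally show "RL_hat_deriv k \<mu> (poly u0) x = poly f x" .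
    qed
    show ?thesis
    proof
      show "\<exists>!u :: real poly. degree u \<le> N \<and> poly u (-1) = 0 \<and>
                 (\<forall>x\<in>{-1<..<1}. RL_hat_deriv k \<mu> (poly u) x = poly f x)"
      proof (rule ex1I[of _ u0])
        show "degree u0 \<le> N \<and> poly u0 (-1) = 0 \<and>
                 (\<forall>x\<in>{-1<..<1}. RL_hat_deriv k \<mu> (poly u0) x = poly f x)" by (rule S)
        fix u assume "degree u \<le> N \<and> poly u (-1) = 0 \<and>
                 (\<forall>x\<in>{-1<..<1}. RL_hat_deriv k \<mu> (poly u) x = poly f x)"
        hence "poly u = poly u0" using chr by auto
        thus "u = u0" by (simp add: poly_eq_poly_eq_iff)
      qed
    next
      show "\<forall>u :: real poly. degree u \<le> N \<and> poly u (-1) = 0 \<and>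
                 (\<forall>x\<in>{-1<..<1}. RL_hat_deriv k \<mu> (poly u) x = poly f x) \<longrightarrow>
               (\<forall>x\<in>{-1<..<1}. poly u x =
                  RL_int \<mu> (\<lambda>y. (1 + y) powr (- \<mu>) * poly f y) x)"
      proof (intro allI impI ballI)
        fix u x assume u: "degree u \<le> N \<and> poly u (-1) = 0 \<and>
                 (\<forall>x\<in>{-1<..<1}. RL_hat_deriv k \<mu> (poly u) x = poly f x)"
          and x: "(x::real) \<in> {-1<..<1}"
        have "poly u x = poly u0 x" using chr u by auto
        also have "\<dots> = (\<Sum>j\<le>N. a j * (Gamma (real j + 1 - \<mu>) / Gamma (real j + 1)) * (1+x)^j)"
          unfolding Pu0
        proof (rule sum.cong[OF refl])
          fix j
          show "c j * (1+x)^j = a j * (Gamma (real j + 1 - \<mu>) / Gamma (real j + 1)) * (1+x)^j"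
          proof (cases "j = 0")
            case True thus ?thesis using a0 by (simp add: c_def)
          next
            case False
            hence "lam k \<mu> j = Gamma (real j + 1) / Gamma (real j + 1 - \<mu>)"
              using lam_inv[OF assms(2,3) k2] by simp
            thus ?thesis by (simp add: c_def)
          qed
        qed
        also have "\<dots> = RL_int \<mu> (\<lambda>y. (1 + y) powr (- \<mu>) * poly f y) x"
          using RL_int_f[OF m0 m2 _ a0 Pf, of x] x by simp
        finally show "poly u x = RL_int \<mu> (\<lambda>y. (1 + y) powr (- \<mu>) * poly f y) x" .
      qed
    qed
  qed
  have part2: "\<exists>q :: real poly. (\<forall>x\<in>{-1<..<1}. RL_hat_deriv k \<mu> (poly u) x = poly q x) \<and>
               (poly q (-1) = 0 \<longleftrightarrow> poly u (-1) = 0)" if u: "degree u \<le> N" for u :: "real poly"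
  proof -
    obtain cu where Pu: "\<And>y. poly u y = (\<Sum>j\<le>N. cu j * (1+y)^j)"
      using poly_repr[OF u] by blast
    define q where "q = mkp N (\<lambda>j. cu j * lam k \<mu> j)"
    show ?thesis
    proof (intro exI conjI ballI)
      fix x :: real assume "x \<in> {-1<..<1}"
      thus "RL_hat_deriv k \<mu> (poly u) x = poly q x"
        using hat_poly[OF r _ Pu, of x] by (simp add: q_def poly_mkp)
    next
      have "poly q (-1) = cu 0 * lam k \<mu> 0"
        using sum_pow0[of "\<lambda>j. cu j * lam k \<mu> j" N] by (simp add: q_def poly_mkp)
      moreover have "poly u (-1) = cu 0" using sum_pow0[of cu N] Pu[of "-1"] by simp
      ultimately show "poly q (-1) = 0 \<longleftrightarrow> poly u (-1) = 0" using lnz[of 0] by simp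
    qed
  qed
  show ?thesis using part1 part2 by blast
qed

end
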